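(* Let $(X,d)$ be a nonempty, separable, ultrametric metric space which is spherically dense. Then: (a) for every $c_0\in X$, all real numbers $0\le r_1<r_0$, and every $z\in X$, there exists $c_1\in X$ such that $B(c_1,r_1)\subseteq B(c_0,r_0)$ and $z\notin B(c_1,r_1)$; (b) $X$ is not spherically complete.
   Context: $B(c,r)=\{x: d(x,c)\le r\}$ is the closed ball, $r\ge0$. A metric space is spherically dense if $\operatorname{diam}(B(c,r))=r$ for every $c\in X$ and every $r\ge 0$, where $\operatorname{diam}(A)=\sup_{x,y\in A}d(x,y)$. Ultrametric: $d(x,z)\le\max(d(x,y),d(y,z))$. Separable: has a countable dense subset. Spherically complete: for all sequences $(c_i)$ in $X$, $(r_i)$ in $\mathbb R_{\ge0}$ with $B(c_0,r_0)\supseteq B(c_1,r_1)\supseteq\cdots$, $\bigcap_i B(c_i,r_i)\ne\emptyset$. *)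

theory Defs
  imports "HOL-Analysis.Analysis"
begin

text \<open>The metric space X is the whole type 'a (hence nonempty), with closed balls cball c r.\<close>

definition ultrametric :: "'a::metric_space itself \<Rightarrow> bool" where
  "ultrametric _ \<longleftrightarrow> (\<forall>x y z::'a. dist x z \<le> max (dist x y) (dist y z))"

definition separable_metric :: "'a::metric_space itself \<Rightarrow> bool" where
  "separable_metric _ \<longleftrightarrow> (\<exists>D::'a set. countable D \<and> closure D = UNIV)"

definition spherically_dense :: "'a::metric_space itself \<Rightarrow> bool" where
  "spherically_dense _ \<longleftrightarrow> (\<forall>(c::'a) (r::real). r \<ge> 0 \<longrightarrow> diameter (cball c r) = r)"

definition spherically_complete :: "'a::metric_space itself \<Rightarrow> bool" where
  "spherically_complete _ \<longleftrightarrow>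
     (\<forall>(c::nat \<Rightarrow> 'a) (r::nat \<Rightarrow> real).
        (\<forall>i. r i \<ge> 0) \<longrightarrow> (\<forall>i. cball (c (Suc i)) (r (Suc i)) \<subseteq> cball (c i) (r i)) \<longrightarrow>
        (\<Inter>i. cball (c i) (r i)) \<noteq> {})"

end

theory Submission
  imports Defs
begin

theorem theorem3p2:
  assumes "ultrametric TYPE('a::metric_space)"
    and "separable_metric TYPE('a)"
    and "spherically_dense TYPE('a)"
  shows "(\<forall>(c0::'a) (r0::real) r1 (z::'a). 0 \<le> r1 \<and> r1 < r0 \<longrightarrow>
            (\<exists>c1::'a. cball c1 r1 \<subseteq> cball c0 r0 \<and> z \<notin> cball c1 r1))
         \<and> \<not> spherically_complete TYPE('a)"
proof -
  have U: "\<And>x y z::'a. dist x z \<le> max (dist x y) (dist y z)"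
    using assms(1) unfolding ultrametric_def by blast
  have A: "\<forall>(c0::'a) (r0::real) r1 (z::'a). 0 \<le> r1 \<and> r1 < r0 \<longrightarrow>
            (\<exists>c1::'a. cball c1 r1 \<subseteq> cball c0 r0 \<and> z \<notin> cball c1 r1)"
  proof (intro allI impI)
    fix c0 :: 'a and r0 r1 :: real and z :: 'a
    assume h: "0 \<le> r1 \<and> r1 < r0"
    have d: "diameter (cball c0 r0) = r0"
      using assms(3) h unfolding spherically_dense_def by auto
    obtain x y where xy: "x \<in> cball c0 r0" "y \<in> cball c0 r0" "(r1+r0)/2 < dist x y"
      using diameter_lower_bounded[of "cball c0 r0" "(r1+r0)/2"] h d by auto
    have mid: "r1 < (r1+r0)/2" using h by (simp add: field_simps)
    have "dist x y \<le> max (dist x z) (dist z y)" by (rule U)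
    then obtain c1 where c1: "c1 \<in> cball c0 r0" "r1 < dist c1 z"
    proof (cases "r1 < dist x z")
      case True then show ?thesis using that[of x] xy(1) by blast
    next
      case False
      have "dist x y \<le> dist x z \<or> dist x y \<le> dist z y"
        using \<open>dist x y \<le> max (dist x z) (dist z y)\<close> by (simp add: le_max_iff_disj)
      then have "r1 < dist z y"
      proof
        assume "dist x y \<le> dist x z" then have False using False xy(3) mid by linarith
        then show ?thesis by simp
      next
        assume "dist x y \<le> dist z y" then show ?thesis using xy(3) mid by linarith
      qed
      then show ?thesis using that[of y] xy(2) dist_commute[of z y] by simp
    qed
    show "\<exists>c1::'a. cball c1 r1 \<subseteq> cball c0 r0 \<and> z \<notin> cball c1 r1"
    proof (intro exI conjI)
      show "cball c1 r1 \<subseteq> cball c0 r0"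
      proof
        fix w assume "w \<in> cball c1 r1"
        then have "dist c1 w \<le> r1" by simp
        moreover have "dist c0 w \<le> max (dist c0 c1) (dist c1 w)" by (rule U)
        then have "dist c0 w \<le> dist c0 c1 \<or> dist c0 w \<le> dist c1 w" by (simp add: le_max_iff_disj)
        moreover have "dist c0 c1 \<le> r0" using c1(1) by simp
        moreover have "r1 < r0" using h by simp
        ultimately have "dist c0 w \<le> r0" by linarith
        then show "w \<in> cball c0 r0" by simp
      qed
      show "z \<notin> cball c1 r1" using c1 by simp
    qed
  qed
  define g where "g = (\<lambda>(c0::'a) (r0::real) (r1::real) (z::'a).
      SOME c1. cball c1 r1 \<subseteq> cball c0 r0 \<and> z \<notin> cball c1 r1)"
  have G: "cball (g c0 r0 r1 z) r1 \<subseteq> cball c0 r0 \<and> z \<notin> cball (g c0 r0 r1 z) r1"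
    if "0 \<le> r1" "r1 < r0" for c0 r0 r1 z
  proof -
    have "\<exists>c1. cball c1 r1 \<subseteq> cball c0 r0 \<and> z \<notin> cball c1 r1" using A that by blast
    then show ?thesis unfolding g_def by (rule someI_ex)
  qed
  obtain D :: "'a set" where D: "countable D" "closure D = UNIV"
    using assms(2) unfolding separable_metric_def by blast
  have Dne: "D \<noteq> {}" using D by auto
  define e where "e = from_nat_into D"
  have eD: "range e = D" unfolding e_def using range_from_nat_into[OF Dne D(1)] .
  define r :: "nat \<Rightarrow> real" where "r = (\<lambda>i. 1 + inverse (real (Suc i)))"
  have r1: "\<And>i. 1 \<le> r i" unfolding r_def by auto
  have rdec: "\<And>i. r (Suc i) < r i" unfolding r_def
    by (simp add: field_simps)
  define c :: "nat \<Rightarrow> 'a" where "c = rec_nat undefined (\<lambda>i ci. g ci (r i) (r (Suc i)) (e i))"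
  have cS: "\<And>i. c (Suc i) = g (c i) (r i) (r (Suc i)) (e i)" unfolding c_def by simp
  have Gi: "\<And>i. cball (c (Suc i)) (r (Suc i)) \<subseteq> cball (c i) (r i) \<and> e i \<notin> cball (c (Suc i)) (r (Suc i))"
  proof -
    fix i
    have "0 \<le> r (Suc i)" using r1[of "Suc i"] by linarith
    from G[OF this rdec[of i], of "c i" "e i"]
    show "cball (c (Suc i)) (r (Suc i)) \<subseteq> cball (c i) (r i) \<and> e i \<notin> cball (c (Suc i)) (r (Suc i))"
      unfolding cS .
  qed
  have "(\<Inter>i. cball (c i) (r i)) = {}"
  proof (rule ccontr)
    assume "(\<Inter>i. cball (c i) (r i)) \<noteq> {}"
    then obtain x where x: "\<And>i. x \<in> cball (c i) (r i)" by blast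
    have "x \<in> closure D" using D by simp
    then obtain y where y: "y \<in> D" "dist y x < 1" using closure_approachable[of x D] zero_less_one by blast
    then obtain j where j: "y = e j" using eD by blast
    have "dist (c (Suc j)) y \<le> max (dist (c (Suc j)) x) (dist x y)" by (rule U)
    moreover have "dist (c (Suc j)) x \<le> r (Suc j)" using x[of "Suc j"] by simp
    moreover have "dist x y \<le> r (Suc j)" using y(2) r1[of "Suc j"] dist_commute[of x y] by linarith
    ultimately have "dist (c (Suc j)) y \<le> r (Suc j)" by linarith
    then have "y \<in> cball (c (Suc j)) (r (Suc j))" by simp
    then show False using Gi[of j] j by simp
  qed
  have "\<not> spherically_complete TYPE('a)"
  proof
    assume sc: "spherically_complete TYPE('a)"
    have r0: "\<forall>i. 0 \<le> r i" using r1 by (simp add: order_trans[OF zero_le_one])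
    have "\<forall>i. cball (c (Suc i)) (r (Suc i)) \<subseteq> cball (c i) (r i)" using Gi by blast
    then have "(\<Inter>i. cball (c i) (r i)) \<noteq> {}"
      using sc r0 unfolding spherically_complete_def by blast
    then show False using \<open>(\<Inter>i. cball (c i) (r i)) = {}\<close> by simp
  qed
  with A show ?thesis by blast
qed

end
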